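(* Let $H\in(1/2,1)$ and let $B^H$ be a fractional Brownian motion on $[0,1]$ with Hurst index $H$. Fix $\alpha\in(1/2,H)$, $\delta\in(0,H-\alpha)$ and $\rho>0$, and define $$N=\sup\Bigl\{n\ge1:\ \|B^H_n-B^H_{n-1}\|_\infty\ge \rho\cdot 2^{-(H-\delta)n}\Bigr\}.$$ Then for every $n>N$, $$\|B^H-B^H_n\|_\alpha\le \frac{\rho\, 2^{2-\alpha}\cdot 2^{-(H-\alpha-\delta)(n+1)}}{1-2^{-(H-\alpha-\delta)}}.$$
   Context: A fractional Brownian motion with Hurst index $H$ is a centered Gaussian process with $B^H(0)=0$ and covariance $\mathbb{E}[B^H(s)B^H(t)]=\tfrac12(|s|^{2H}+|t|^{2H}-|s-t|^{2H})$, taken with continuous sample paths. For $n\ge0$, $B^H_n$ is the function on $[0,1]$ obtained by linear interpolation of the values of $B^H$ at the dyadic points $i/2^n$, $i=0,\dots,2^n$; $B^H_{-1}\equiv0$. $\|u\|_\infty=\sup_{t\in[0,1]}|u(t)|$ and $\|u\|_\alpha=\sup_{0\le s<t\le1}|u(s)-u(t)|/|s-t|^\alpha$. *)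

theory Defs
  imports "HOL-Probability.Probability" "HOL-Library.Extended_Nat"
begin

definition fbm_cov :: "real \<Rightarrow> real \<Rightarrow> real \<Rightarrow> real" where
  "fbm_cov H s t = (\<bar>s\<bar> powr (2*H) + \<bar>t\<bar> powr (2*H) - \<bar>s - t\<bar> powr (2*H)) / 2"

definition centered_gaussian_rv :: "'a measure \<Rightarrow> ('a \<Rightarrow> real) \<Rightarrow> real \<Rightarrow> bool" where
  "centered_gaussian_rv M X v \<longleftrightarrow>
     X \<in> borel_measurable M \<and>
     (if v = 0 then (AE \<omega> in M. X \<omega> = 0)
      else 0 < v \<and> distributed M lborel X (\<lambda>x. ennreal (normal_density 0 (sqrt v) x)))"

text \<open>B is a fractional Brownian motion on [0,1] with Hurst index H on the probability
  space M: a centered Gaussian process (all finite linear combinations are centered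
  Gaussian with the variance given by the covariance), B(0) = 0, continuous paths.\<close>
definition is_fbm :: "'a measure \<Rightarrow> real \<Rightarrow> ('a \<Rightarrow> real \<Rightarrow> real) \<Rightarrow> bool" where
  "is_fbm M H B \<longleftrightarrow>
     prob_space M \<and>
     (\<forall>\<omega>\<in>space M. B \<omega> 0 = 0 \<and> continuous_on {0..1} (B \<omega>)) \<and>
     (\<forall>T (c :: real \<Rightarrow> real). finite T \<longrightarrow> T \<subseteq> {0..1} \<longrightarrow>
        centered_gaussian_rv M (\<lambda>\<omega>. \<Sum>t\<in>T. c t * B \<omega> t)
          (\<Sum>s\<in>T. \<Sum>t\<in>T. c s * c t * fbm_cov H s t))"

text \<open>Linear interpolation of f at the dyadic points i/2^n, i = 0..2^n (on [0,1]).\<close>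
definition dyadic_interp :: "(real \<Rightarrow> real) \<Rightarrow> nat \<Rightarrow> real \<Rightarrow> real" where
  "dyadic_interp f n t =
     (let m = (2::nat) ^ n; k = min (nat \<lfloor>t * real m\<rfloor>) (m - 1)
      in f (real k / real m) + (t * real m - real k) * (f (real (k+1) / real m) - f (real k / real m)))"

text \<open>Sup norm on [0,1] and alpha-Hoelder seminorm on [0,1], valued in the extended reals
  (so that an infinite value is represented faithfully).\<close>
definition sup_norm01 :: "(real \<Rightarrow> real) \<Rightarrow> ereal" where
  "sup_norm01 u = (SUP t\<in>{0..1}. ereal \<bar>u t\<bar>)"

definition holder_norm01 :: "real \<Rightarrow> (real \<Rightarrow> real) \<Rightarrow> ereal" where
  "holder_norm01 \<alpha> u = (SUP p\<in>{(s,t). 0 \<le> s \<and> s < t \<and> t \<le> 1}.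
       ereal (\<bar>u (fst p) - u (snd p)\<bar> / (snd p - fst p) powr \<alpha>))"

end

theory Submission
  imports Defs
begin

lemma interp_piece:
  fixes f :: "real \<Rightarrow> real"
  assumes "j < 2^m" "real j / 2^m \<le> t" "t \<le> real (j+1) / 2^m"
  shows "dyadic_interp f m t = f (real j / 2^m) + (t * 2^m - real j) * (f (real (j+1) / 2^m) - f (real j / 2^m))"
proof -
  have M: "(0::real) < 2^m" by simp
  have lo: "real j \<le> t * 2^m" using assms(2) M by (simp add: field_simps)
  have hi: "t * 2^m \<le> real j + 1" using assms(3) M by (simp add: field_simps)
  show ?thesis
  proof (cases "t * 2^m < real j + 1")
    case True
    then have "\<lfloor>t * 2^m\<rfloor> = int j" using lo by (simp add: floor_eq_iff)
    then have "min (nat \<lfloor>t * real ((2::nat)^m)\<rfloor>) (2^m - 1) = j" using assms(1) by simp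
    then show ?thesis unfolding dyadic_interp_def Let_def by simp
  next
    case False
    then have e: "t * 2^m = real j + 1" using hi by simp
    then have fl: "\<lfloor>t * 2^m\<rfloor> = int j + 1" by simp
    show ?thesis
    proof (cases "j + 1 < 2^m")
      case True
      then have "min (nat \<lfloor>t * real ((2::nat)^m)\<rfloor>) (2^m - 1) = j + 1" using fl by simp
      then show ?thesis unfolding dyadic_interp_def Let_def using e
        by (simp add: add_divide_distrib)
    next
      case False
      then have "min (nat \<lfloor>t * real ((2::nat)^m)\<rfloor>) (2^m - 1) = j" using fl assms(1) by simp
      then show ?thesis unfolding dyadic_interp_def Let_def by simp
    qed
  qed
qed

lemma interp_node:
  fixes f :: "real \<Rightarrow> real"
  assumes "i \<le> 2^m"
  shows "dyadic_interp f m (real i / 2^m) = f (real i / 2^m)"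
proof (cases "i < 2^m")
  case True
  then show ?thesis using interp_piece[of i m "real i / 2^m" f] by (simp add: divide_right_mono)
next
  case False
  then have i: "i = 2^m" using assms by simp
  have "(0::nat) < 2^m" by simp
  then obtain j where j: "2^m = Suc j" using not0_implies_Suc by (metis gr0_implies_Suc)
  have "dyadic_interp f m (real (Suc j) / 2^m) = f (real j / 2^m) + (real (Suc j) / 2^m * 2^m - real j) * (f (real (j+1) / 2^m) - f (real j / 2^m))"
    using interp_piece[of j m "real (Suc j) / 2^m" f] j by (simp add: divide_right_mono)
  also have "\<dots> = f (real (Suc j) / 2^m)" by simp
  finally show ?thesis using i j by simp
qed

lemma interp_affine:
  fixes f :: "real \<Rightarrow> real"
  assumes "j < 2^m"
  shows "\<exists>c d. \<forall>t. real j / 2^m \<le> t \<and> t \<le> real (j+1) / 2^m \<longrightarrow> dyadic_interp f m t = c + d * t"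
proof -
  let ?a = "f (real j / 2^m)" and ?b = "f (real (j+1) / 2^m)"
  show ?thesis
    apply (rule exI[of _ "?a - real j * (?b - ?a)"], rule exI[of _ "2^m * (?b - ?a)"])
    using interp_piece[OF assms] by (auto simp: algebra_simps)
qed

lemma diff_affine:
  fixes f :: "real \<Rightarrow> real"
  assumes "j < 2^Suc m"
  shows "\<exists>c d. \<forall>t. real j / 2^Suc m \<le> t \<and> t \<le> real (j+1) / 2^Suc m \<longrightarrow>
     dyadic_interp f (Suc m) t - dyadic_interp f m t = c + d * t"
proof -
  obtain c1 d1 where 1: "\<forall>t. real j / 2^Suc m \<le> t \<and> t \<le> real (j+1) / 2^Suc m \<longrightarrow> dyadic_interp f (Suc m) t = c1 + d1 * t"
    using interp_affine[OF assms] by blast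
  have jd: "j div 2 < 2^m" using assms by auto
  obtain c2 d2 where 2: "\<forall>t. real (j div 2) / 2^m \<le> t \<and> t \<le> real (j div 2 + 1) / 2^m \<longrightarrow> dyadic_interp f m t = c2 + d2 * t"
    using interp_affine[OF jd] by blast
  have a: "real (j div 2) / 2^m \<le> real j / 2^Suc m"
  proof -
    have "real (2 * (j div 2)) \<le> real j" by simp
    then have "real (j div 2) \<le> real j / 2" by linarith
    then have "real (j div 2) / 2^m \<le> (real j / 2) / 2^m" by (rule divide_right_mono) simp
    then show ?thesis by simp
  qed
  have b: "real (j+1) / 2^Suc m \<le> real (j div 2 + 1) / 2^m"
  proof -
    have "j + 1 \<le> 2 * (j div 2 + 1)" by presburger
    then have "real (j + 1) \<le> real (2 * (j div 2 + 1))" by (simp only: of_nat_le_iff)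
    then have "real (j+1) / 2 \<le> real (j div 2 + 1)" by simp
    then have "(real (j+1) / 2) / 2^m \<le> real (j div 2 + 1) / 2^m" by (rule divide_right_mono) simp
    then show ?thesis by simp
  qed
  show ?thesis
    apply (rule exI[of _ "c1 - c2"], rule exI[of _ "d1 - d2"])
    using 1 2 a b by (auto simp: algebra_simps)
qed

lemma diff_zero_node:
  fixes f :: "real \<Rightarrow> real"
  assumes "i \<le> 2^m"
  shows "dyadic_interp f (Suc m) (real (2*i) / 2^Suc m) - dyadic_interp f m (real (2*i) / 2^Suc m) = 0"
proof -
  have e: "real (2*i) / 2^Suc m = real i / 2^m" by simp
  have "2 * i \<le> 2^Suc m" using assms by simp
  then show ?thesis using interp_node[of "2*i" "Suc m" f] interp_node[OF assms, of f] e by simp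
qed

lemma diff_slope:
  fixes f :: "real \<Rightarrow> real"
  assumes bd: "\<forall>t\<in>{0..1}. \<bar>dyadic_interp f (Suc m) t - dyadic_interp f m t\<bar> \<le> r"
    and j: "j < 2^Suc m"
    and s: "real j / 2^Suc m \<le> s" "s \<le> real (j+1) / 2^Suc m"
    and t: "real j / 2^Suc m \<le> t" "t \<le> real (j+1) / 2^Suc m"
  shows "\<bar>(dyadic_interp f (Suc m) s - dyadic_interp f m s) - (dyadic_interp f (Suc m) t - dyadic_interp f m t)\<bar>
     \<le> r * 2^Suc m * \<bar>s - t\<bar>"
proof -
  define g where "g = (\<lambda>t. dyadic_interp f (Suc m) t - dyadic_interp f m t)"
  obtain c d where cd: "\<forall>t. real j / 2^Suc m \<le> t \<and> t \<le> real (j+1) / 2^Suc m \<longrightarrow> g t = c + d * t"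
    using diff_affine[OF j, of f] unfolding g_def by blast
  define a where "a = real j / 2^Suc m"
  define b where "b = real (j+1) / 2^Suc m"
  have M: "(0::real) < 2^Suc m" by simp
  have ab: "a \<le> b" unfolding a_def b_def by (simp add: divide_right_mono)
  have jr: "real j < 2^Suc m" using j by (metis of_nat_less_iff of_nat_numeral of_nat_power)
  have a01: "a \<in> {0..1}" unfolding a_def using jr M by simp
  have "real (j+1) \<le> 2^Suc m" using j by (metis Suc_eq_plus1 Suc_leI of_nat_le_iff of_nat_numeral of_nat_power)
  then have b01: "b \<in> {0..1}" unfolding b_def using M by (simp add: field_simps)
  have gab: "g b - g a = d / 2^Suc m"
    using cd ab unfolding a_def b_def by (auto simp: field_simps)
  have "g a = 0 \<or> g b = 0"
  proof (cases "even j")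
    case True
    then obtain i where i: "j = 2*i" by auto
    then have "i \<le> 2^m" using j by simp
    then show ?thesis using diff_zero_node[of i m f] unfolding g_def a_def i by simp
  next
    case False
    then obtain k where "j = 2*k+1" using oddE by blast
    then obtain i where i: "j + 1 = 2*i" by (intro that[of "k+1"]) simp
    have "2 * i \<le> 2 * 2^m" using j i by simp
    then have "i \<le> 2^m" by simp
    then show ?thesis using diff_zero_node[of i m f] unfolding g_def b_def i by simp
  qed
  moreover have "\<bar>g a\<bar> \<le> r" "\<bar>g b\<bar> \<le> r" using bd a01 b01 unfolding g_def by auto
  ultimately have "\<bar>g b - g a\<bar> \<le> r" by auto
  then have "\<bar>d\<bar> \<le> r * 2^Suc m" using gab M by (simp add: abs_divide field_simps)
  moreover have "g s - g t = d * (s - t)" using cd s t by (auto simp: algebra_simps)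
  ultimately have "\<bar>g s - g t\<bar> \<le> r * 2^Suc m * \<bar>s - t\<bar>"
    by (simp add: abs_mult mult_right_mono)
  then show ?thesis unfolding g_def by simp
qed


lemma exists_piece:
  fixes s :: real
  assumes "0 \<le> s" "s \<le> 1"
  shows "\<exists>j<(2::nat)^k. real j / 2^k \<le> s \<and> s \<le> real (j+1) / 2^k"
proof (cases "s = 1")
  case True
  have "(0::nat) < 2^k" by simp
  then obtain i where i: "(2::nat)^k = Suc i" by (metis gr0_implies_Suc)
  then have "real (Suc i) = 2^k" by (metis of_nat_numeral of_nat_power)
  then show ?thesis using True i
    by (intro exI[of _ i]) (auto simp: field_simps)
next
  case False
  define j where "j = nat \<lfloor>s * 2^k\<rfloor>"
  have M: "(0::real) < 2^k" by simp
  have sk: "0 \<le> s * 2^k" "s * 2^k < 2^k" using assms False M by auto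
  have j1: "real j \<le> s * 2^k" unfolding j_def using sk by linarith
  have j2: "s * 2^k < real j + 1" unfolding j_def using sk by linarith
  have "real j < 2^k" using j1 sk by linarith
  then have "j < 2^k" by (metis of_nat_less_iff of_nat_numeral of_nat_power)
  moreover have "real j / 2^k \<le> s" using j1 M by (simp add: field_simps)
  moreover have "s \<le> real (j+1) / 2^k" using j2 M by (simp add: field_simps)
  ultimately show ?thesis by blast
qed

lemma diff_lip:
  fixes f :: "real \<Rightarrow> real"
  assumes bd: "\<forall>t\<in>{0..1}. \<bar>dyadic_interp f (Suc m) t - dyadic_interp f m t\<bar> \<le> r"
    and st: "0 \<le> s" "s \<le> t" "t \<le> 1" "t - s \<le> 1 / 2^Suc m"
  shows "\<bar>(dyadic_interp f (Suc m) s - dyadic_interp f m s) - (dyadic_interp f (Suc m) t - dyadic_interp f m t)\<bar>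
     \<le> r * 2^Suc m * (t - s)"
proof -
  define g where "g = (\<lambda>t. dyadic_interp f (Suc m) t - dyadic_interp f m t)"
  have M: "(0::real) < 2^Suc m" by simp
  obtain j where j: "j < 2^Suc m" "real j / 2^Suc m \<le> s" "s \<le> real (j+1) / 2^Suc m"
    using exists_piece[of s "Suc m"] st by auto
  show ?thesis
  proof (cases "t \<le> real (j+1) / 2^Suc m")
    case True
    then show ?thesis using diff_slope[OF bd j(1) j(2) j(3), of t] j st by simp
  next
    case False
    define p where "p = real (j+1) / 2^Suc m"
    have tM: "t * 2^Suc m \<le> 2^Suc m" using st M by simp
    have "real (j+1) / 2^Suc m < t" using False by simp
    then have "real (j+1) < t * 2^Suc m" using M by (simp add: field_simps)
    then have "real (j+1) < 2^Suc m" using tM by linarith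
    then have j1: "j + 1 < 2^Suc m" by (metis of_nat_less_iff of_nat_numeral of_nat_power)
    have "t \<le> real (j+1+1) / 2^Suc m"
    proof -
      have "t \<le> s + 1 / 2^Suc m" using st by simp
      also have "\<dots> \<le> real (j+1) / 2^Suc m + 1 / 2^Suc m" using j(3) by simp
      also have "\<dots> = real (j+1+1) / 2^Suc m" by (simp add: field_simps)
      finally show ?thesis .
    qed
    then have t1: "\<bar>g p - g t\<bar> \<le> r * 2^Suc m * \<bar>p - t\<bar>"
      using diff_slope[OF bd j1, of p t] False unfolding g_def p_def by simp
    have t0: "\<bar>g s - g p\<bar> \<le> r * 2^Suc m * \<bar>s - p\<bar>"
      using diff_slope[OF bd j(1) j(2) j(3), of p] j unfolding g_def p_def by (simp add: divide_right_mono)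
    have "\<bar>g s - g t\<bar> \<le> \<bar>g s - g p\<bar> + \<bar>g p - g t\<bar>" by simp
    also have "\<dots> \<le> r * 2^Suc m * \<bar>s - p\<bar> + r * 2^Suc m * \<bar>p - t\<bar>" using t0 t1 by simp
    also have "\<dots> = r * 2^Suc m * (t - s)" using False j(3) unfolding p_def
      by (simp add: algebra_simps)
    finally show ?thesis unfolding g_def by simp
  qed
qed

lemma diff_holder:
  fixes f :: "real \<Rightarrow> real"
  assumes bd: "\<forall>t\<in>{0..1}. \<bar>dyadic_interp f (Suc m) t - dyadic_interp f m t\<bar> \<le> r"
    and st: "0 \<le> s" "s < t" "t \<le> 1" and al: "0 < \<alpha>" "\<alpha> \<le> 1"
  shows "\<bar>(dyadic_interp f (Suc m) s - dyadic_interp f m s) - (dyadic_interp f (Suc m) t - dyadic_interp f m t)\<bar>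
     \<le> 2 * r * 2 powr (\<alpha> * real (Suc m)) * (t - s) powr \<alpha>"
proof -
  define g where "g = (\<lambda>t. dyadic_interp f (Suc m) t - dyadic_interp f m t)"
  define M :: real where "M = 2^Suc m"
  have M: "0 < M" unfolding M_def by simp
  have r0: "0 \<le> r" using bd by (metis abs_ge_zero atLeastAtMost_iff order_trans zero_le_one order_refl)
  have Mp: "M powr \<alpha> = 2 powr (\<alpha> * real (Suc m))"
  proof -
    have "M = 2 powr real (Suc m)" unfolding M_def by (rule powr_realpow[symmetric]) simp
    then show ?thesis by (simp add: powr_powr mult.commute)
  qed
  have xp: "(M * (t - s)) powr \<alpha> = M powr \<alpha> * (t - s) powr \<alpha>" by (rule powr_mult)
  have x0: "0 < M * (t - s)" using M st by simp
  show ?thesis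
  proof (cases "t - s \<le> 1 / M")
    case True
    then have x1: "M * (t - s) \<le> 1" using M by (simp add: field_simps)
    have "\<bar>g s - g t\<bar> \<le> r * M * (t - s)" using diff_lip[OF bd st(1) _ st(3)] True st unfolding g_def M_def by simp
    also have "\<dots> = r * (M * (t - s)) powr 1" using x0 by simp
    also have "\<dots> \<le> r * (M * (t - s)) powr \<alpha>"
      using powr_mono'[OF al(2), of "M * (t - s)"] x0 x1 r0 by (simp add: mult_left_mono)
    also have "\<dots> \<le> 2 * r * (M * (t - s)) powr \<alpha>" using r0 by simp
    finally show ?thesis unfolding g_def xp Mp by (simp add: mult.assoc)
  next
    case False
    then have x1: "1 \<le> M * (t - s)" using M by (simp add: field_simps)
    have "\<bar>g s\<bar> \<le> r" "\<bar>g t\<bar> \<le> r" using bd st unfolding g_def by auto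
    then have "\<bar>g s - g t\<bar> \<le> 2 * r" by simp
    also have "\<dots> \<le> 2 * r * (M * (t - s)) powr \<alpha>"
    proof -
      have "(2 * r) * 1 \<le> (2 * r) * (M * (t - s)) powr \<alpha>"
        using ge_one_powr_ge_zero[OF x1, of \<alpha>] al r0 by (intro mult_left_mono) auto
      then show ?thesis by simp
    qed
    finally show ?thesis unfolding g_def xp Mp by (simp add: mult.assoc)
  qed
qed


lemma interp_tendsto:
  fixes f :: "real \<Rightarrow> real"
  assumes cf: "continuous_on {0..1} f" and t: "0 \<le> t" "t \<le> 1"
  shows "(\<lambda>K. dyadic_interp f K t) \<longlonglongrightarrow> f t"
proof -
  have "\<forall>K. \<exists>j. j < (2::nat)^K \<and> real j / 2^K \<le> t \<and> t \<le> real (j+1) / 2^K"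
    using exists_piece[OF t] by blast
  then obtain J where J: "\<And>K. J K < (2::nat)^K" "\<And>K. real (J K) / 2^K \<le> t" "\<And>K. t \<le> real (J K + 1) / 2^K"
    by metis
  define a where "a K = real (J K) / 2^K" for K
  define b where "b K = real (J K + 1) / 2^K" for K
  define \<theta> where "\<theta> K = t * 2^K - real (J K)" for K
  have val: "dyadic_interp f K t = f (a K) + \<theta> K * (f (b K) - f (a K))" for K
    using interp_piece[OF J(1) J(2) J(3), of f] unfolding a_def b_def \<theta>_def by simp
  have th: "0 \<le> \<theta> K" "\<theta> K \<le> 1" for K
  proof -
    have M: "(0::real) < 2^K" by simp
    show "0 \<le> \<theta> K" using J(2)[of K] M unfolding \<theta>_def by (simp add: field_simps)
    show "\<theta> K \<le> 1" using J(3)[of K] M unfolding \<theta>_def by (simp add: field_simps)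
  qed
  have ab01: "a K \<in> {0..1}" "b K \<in> {0..1}" for K
  proof -
    have M: "(0::real) < 2^K" by simp
    have "J K + 1 \<le> 2^K" using J(1)[of K] by simp
    then have "real (J K + 1) \<le> 2^K" by (metis of_nat_le_iff of_nat_numeral of_nat_power)
    moreover have "real (J K) \<le> real (J K + 1)" by simp
    ultimately have "real (J K) \<le> 2^K" by linarith
    with \<open>real (J K + 1) \<le> 2^K\<close> show "a K \<in> {0..1}" "b K \<in> {0..1}" unfolding a_def b_def using M by (auto simp: field_simps)
  qed
  have ha: "\<bar>a K - t\<bar> \<le> (1/2)^K" and hb: "\<bar>b K - t\<bar> \<le> (1/2)^K" for K
  proof -
    have "b K - a K = (1/2)^K" unfolding a_def b_def by (simp add: field_simps power_one_over)
    moreover have "a K \<le> t" "t \<le> b K" using J unfolding a_def b_def by auto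
    ultimately show "\<bar>a K - t\<bar> \<le> (1/2)^K" "\<bar>b K - t\<bar> \<le> (1/2)^K" by auto
  qed
  have z: "(\<lambda>K. (1/2::real)^K) \<longlonglongrightarrow> 0" by (rule LIMSEQ_realpow_zero) auto
  have "(\<lambda>K. a K - t) \<longlonglongrightarrow> 0"
    by (rule Lim_null_comparison[OF _ z]) (use ha in auto)
  then have "a \<longlonglongrightarrow> t" by (rule LIM_zero_cancel)
  then have fa: "(\<lambda>K. f (a K)) \<longlonglongrightarrow> f t"
    by (rule continuous_on_tendsto_compose[OF cf]) (use ab01 t in auto)
  have "(\<lambda>K. b K - t) \<longlonglongrightarrow> 0"
    by (rule Lim_null_comparison[OF _ z]) (use hb in auto)
  then have "b \<longlonglongrightarrow> t" by (rule LIM_zero_cancel)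
  then have fb: "(\<lambda>K. f (b K)) \<longlonglongrightarrow> f t"
    by (rule continuous_on_tendsto_compose[OF cf]) (use ab01 t in auto)
  have g0: "(\<lambda>K. \<bar>f (a K) - f t\<bar> + \<bar>f (b K) - f t\<bar>) \<longlonglongrightarrow> 0"
  proof -
    have "(\<lambda>K. f (a K) - f t) \<longlonglongrightarrow> 0" using fa by (rule LIM_zero)
    then have 1: "(\<lambda>K. \<bar>f (a K) - f t\<bar>) \<longlonglongrightarrow> 0" by (rule tendsto_rabs_zero)
    have "(\<lambda>K. f (b K) - f t) \<longlonglongrightarrow> 0" using fb by (rule LIM_zero)
    then have 2: "(\<lambda>K. \<bar>f (b K) - f t\<bar>) \<longlonglongrightarrow> 0" by (rule tendsto_rabs_zero)
    show ?thesis using tendsto_add[OF 1 2] by simp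
  qed
  have bnd: "norm (dyadic_interp f K t - f t) \<le> \<bar>f (a K) - f t\<bar> + \<bar>f (b K) - f t\<bar>" for K
  proof -
    have "dyadic_interp f K t - f t = (1 - \<theta> K) * (f (a K) - f t) + \<theta> K * (f (b K) - f t)"
      unfolding val by (simp add: algebra_simps)
    also have "\<bar>\<dots>\<bar> \<le> (1 - \<theta> K) * \<bar>f (a K) - f t\<bar> + \<theta> K * \<bar>f (b K) - f t\<bar>"
    proof -
      have "\<bar>(1 - \<theta> K) * (f (a K) - f t) + \<theta> K * (f (b K) - f t)\<bar> \<le> \<bar>(1 - \<theta> K) * (f (a K) - f t)\<bar> + \<bar>\<theta> K * (f (b K) - f t)\<bar>"
        by (rule abs_triangle_ineq)
      then show ?thesis using th[of K] by (simp add: abs_mult)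
    qed
    also have "\<dots> \<le> \<bar>f (a K) - f t\<bar> + \<bar>f (b K) - f t\<bar>"
    proof -
      have "(1 - \<theta> K) * \<bar>f (a K) - f t\<bar> \<le> \<bar>f (a K) - f t\<bar>" using th[of K] by (intro mult_left_le_one_le) auto
      moreover have "\<theta> K * \<bar>f (b K) - f t\<bar> \<le> \<bar>f (b K) - f t\<bar>" using th[of K] by (intro mult_left_le_one_le) auto
      ultimately show ?thesis by linarith
    qed
    finally show ?thesis by simp
  qed
  have "(\<lambda>K. dyadic_interp f K t - f t) \<longlonglongrightarrow> 0"
    by (rule Lim_null_comparison[OF _ g0]) (use bnd in auto)
  then show ?thesis by (rule LIM_zero_cancel)
qed


lemma geom_sum_bound:
  fixes q :: real
  assumes "0 < q" "q < 1"
  shows "(\<Sum>i\<in>{n..<K}. q^Suc i) \<le> q^Suc n / (1 - q)"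
proof (cases "n \<le> K")
  case True
  have eq: "(\<Sum>i\<in>{n..<K}. q^Suc i) * (1 - q) = q^Suc n - q^Suc K"
    using True
  proof (induction K rule: dec_induct)
    case base then show ?case by simp
  next
    case (step K)
    have "(\<Sum>i\<in>{n..<Suc K}. q^Suc i) = (\<Sum>i\<in>{n..<K}. q^Suc i) + q^Suc K"
      using step(1) by (simp del: power_Suc)
    then have "(\<Sum>i\<in>{n..<Suc K}. q^Suc i) * (1 - q) = (\<Sum>i\<in>{n..<K}. q^Suc i) * (1 - q) + q^Suc K * (1 - q)"
      by (simp only: distrib_right)
    also have "\<dots> = q^Suc n - q^Suc K + q^Suc K * (1 - q)" using step.IH by simp
    also have "\<dots> = q^Suc n - q^Suc (Suc K)" by (simp add: algebra_simps)
    finally show ?case .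
  qed
  have "0 \<le> q^Suc K" using assms by simp
  then have "(\<Sum>i\<in>{n..<K}. q^Suc i) * (1 - q) \<le> q^Suc n" using eq by linarith
  then show ?thesis using assms by (simp add: field_simps)
next
  case False
  then show ?thesis using assms by simp
qed

lemma main_det:
  fixes f :: "real \<Rightarrow> real"
  assumes cf: "continuous_on {0..1} f"
    and al: "0 < \<alpha>" "\<alpha> \<le> 1" and c: "0 < c" and rho: "0 \<le> \<rho>"
    and bd: "\<And>i. n \<le> i \<Longrightarrow> \<forall>t\<in>{0..1}. \<bar>dyadic_interp f (Suc i) t - dyadic_interp f i t\<bar> \<le> \<rho> * 2 powr (-(c + \<alpha>) * real (Suc i))"
    and st: "0 \<le> s" "s < t" "t \<le> 1"
  shows "\<bar>(f s - dyadic_interp f n s) - (f t - dyadic_interp f n t)\<bar>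
     \<le> 2 * \<rho> * (t - s) powr \<alpha> * (2 powr (-c))^Suc n / (1 - 2 powr (-c))"
proof -
  define q :: real where "q = 2 powr (-c)"
  have q: "0 < q" "q < 1" unfolding q_def using c by (auto intro: powr_less_one)
  define I where "I = dyadic_interp f"
  define E where "E K = (\<Sum>i\<in>{n..<K}. (I (Suc i) s - I i s) - (I (Suc i) t - I i t))" for K
  have tele: "E K = (I K s - I K t) - (I n s - I n t)" if "n \<le> K" for K
    using that
  proof (induction K rule: dec_induct)
    case base then show ?case by (simp add: E_def)
  next
    case (step K)
    then show ?case by (simp add: E_def sum.op_ivl_Suc algebra_simps)
  qed
  have lvl: "\<bar>(I (Suc i) s - I i s) - (I (Suc i) t - I i t)\<bar> \<le> 2 * \<rho> * (t - s) powr \<alpha> * q^Suc i"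
    if "n \<le> i" for i
  proof -
    have "\<bar>(I (Suc i) s - I i s) - (I (Suc i) t - I i t)\<bar>
        \<le> 2 * (\<rho> * 2 powr (-(c + \<alpha>) * real (Suc i))) * 2 powr (\<alpha> * real (Suc i)) * (t - s) powr \<alpha>"
      unfolding I_def by (rule diff_holder[OF bd[OF that] st al])
    also have "\<rho> * 2 powr (-(c + \<alpha>) * real (Suc i)) * 2 powr (\<alpha> * real (Suc i)) = \<rho> * q^Suc i"
    proof -
      have "q^Suc i = q powr real (Suc i)" by (rule powr_realpow[symmetric, OF q(1)])
      also have "\<dots> = 2 powr (-c * real (Suc i))" unfolding q_def by (simp add: powr_powr)
      finally have "q^Suc i = 2 powr (-c * real (Suc i))" .
      moreover have "2 powr (-(c + \<alpha>) * real (Suc i)) * 2 powr (\<alpha> * real (Suc i)) = 2 powr (-c * real (Suc i))"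
        by (simp add: powr_add[symmetric] algebra_simps)
      ultimately show ?thesis by (simp add: mult.assoc)
    qed
    then have "2 * (\<rho> * 2 powr (-(c + \<alpha>) * real (Suc i))) * 2 powr (\<alpha> * real (Suc i)) * (t - s) powr \<alpha>
       = 2 * \<rho> * (t - s) powr \<alpha> * q^Suc i"
    proof -
      fix X Y Z :: real
      have "\<And>X. 2 * X * Y * Z = 2 * (X * Y) * Z" for Y Z :: real by (simp add: mult.assoc)
      then show ?thesis using \<open>\<rho> * 2 powr (-(c + \<alpha>) * real (Suc i)) * 2 powr (\<alpha> * real (Suc i)) = \<rho> * q^Suc i\<close>
        by (metis mult.commute mult.left_commute)
    qed
    finally show ?thesis .
  qed
  define C where "C = 2 * \<rho> * (t - s) powr \<alpha>"
  have C0: "0 \<le> C" unfolding C_def using rho by simp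
  have Ebd: "\<bar>E K\<bar> \<le> C * q^Suc n / (1 - q)" for K
  proof -
    have "\<bar>E K\<bar> \<le> (\<Sum>i\<in>{n..<K}. \<bar>(I (Suc i) s - I i s) - (I (Suc i) t - I i t)\<bar>)"
      unfolding E_def by (rule sum_abs)
    also have "\<dots> \<le> (\<Sum>i\<in>{n..<K}. C * q^Suc i)"
      by (rule sum_mono) (use lvl in \<open>auto simp: C_def\<close>)
    also have "\<dots> = C * (\<Sum>i\<in>{n..<K}. q^Suc i)" by (simp add: sum_distrib_left)
    also have "\<dots> \<le> C * (q^Suc n / (1 - q))"
      by (rule mult_left_mono[OF geom_sum_bound[OF q] C0])
    finally show ?thesis by simp
  qed
  have lim: "(\<lambda>K. E K) \<longlonglongrightarrow> (f s - f t) - (I n s - I n t)"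
  proof -
    have "(\<lambda>K. (I K s - I K t) - (I n s - I n t)) \<longlonglongrightarrow> (f s - f t) - (I n s - I n t)"
      unfolding I_def using interp_tendsto[OF cf] st
      by (intro tendsto_intros) auto
    moreover have "eventually (\<lambda>K. (I K s - I K t) - (I n s - I n t) = E K) sequentially"
      unfolding eventually_sequentially using tele by (metis (no_types, lifting))
    ultimately show ?thesis using Lim_transform_eventually by blast
  qed
  have "\<bar>(f s - f t) - (I n s - I n t)\<bar> \<le> C * q^Suc n / (1 - q)"
    by (rule LIMSEQ_le_const2[OF tendsto_rabs[OF lim]]) (use Ebd in auto)
  then show ?thesis unfolding C_def q_def I_def by (simp add: algebra_simps)
qed


theorem theorem4:
  fixes M :: "'a measure" and B :: "'a \<Rightarrow> real \<Rightarrow> real"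
    and H \<alpha> \<delta> \<rho> :: real and N :: "'a \<Rightarrow> enat"
  assumes H: "1/2 < H" "H < 1"
    and fbm: "is_fbm M H B"
    and \<alpha>: "1/2 < \<alpha>" "\<alpha> < H"
    and \<delta>: "0 < \<delta>" "\<delta> < H - \<alpha>"
    and \<rho>: "0 < \<rho>"
    and N_def: "\<And>\<omega>. N \<omega> = Sup (enat ` {n. n \<ge> 1 \<and>
        sup_norm01 (\<lambda>t. dyadic_interp (B \<omega>) n t - dyadic_interp (B \<omega>) (n - 1) t)
          \<ge> ereal (\<rho> * 2 powr (- (H - \<delta>) * real n))})"
  shows "\<forall>\<omega>\<in>space M. \<forall>n::nat. enat n > N \<omega> \<longrightarrow>
     holder_norm01 \<alpha> (\<lambda>t. B \<omega> t - dyadic_interp (B \<omega>) n t)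
       \<le> ereal (\<rho> * 2 powr (2 - \<alpha>) * 2 powr (- (H - \<alpha> - \<delta>) * real (n + 1))
                 / (1 - 2 powr (- (H - \<alpha> - \<delta>))))"
proof (intro ballI allI impI)
  fix \<omega> n
  assume \<omega>: "\<omega> \<in> space M" and nN: "enat n > N \<omega>"
  define f where "f = B \<omega>"
  define c where "c = H - \<alpha> - \<delta>"
  have c: "0 < c" unfolding c_def using \<delta> by simp
  have al: "0 < \<alpha>" "\<alpha> \<le> 1" using \<alpha> H by auto
  have cf: "continuous_on {0..1} f" using fbm \<omega> unfolding is_fbm_def f_def by auto
  have bd: "\<forall>t\<in>{0..1}. \<bar>dyadic_interp f (Suc i) t - dyadic_interp f i t\<bar> \<le> \<rho> * 2 powr (-(c + \<alpha>) * real (Suc i))"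
    if "n \<le> i" for i
  proof
    fix t :: real assume t: "t \<in> {0..1}"
    have ce: "-(c + \<alpha>) = - (H - \<delta>)" unfolding c_def by simp
    let ?g = "\<lambda>t. dyadic_interp (B \<omega>) (Suc i) t - dyadic_interp (B \<omega>) (Suc i - 1) t"
    have "\<not> (sup_norm01 ?g \<ge> ereal (\<rho> * 2 powr (- (H - \<delta>) * real (Suc i))))"
    proof
      assume "sup_norm01 ?g \<ge> ereal (\<rho> * 2 powr (- (H - \<delta>) * real (Suc i)))"
      then have "enat (Suc i) \<in> enat ` {n. n \<ge> 1 \<and>
        sup_norm01 (\<lambda>t. dyadic_interp (B \<omega>) n t - dyadic_interp (B \<omega>) (n - 1) t)
          \<ge> ereal (\<rho> * 2 powr (- (H - \<delta>) * real n))}" by auto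
      then have "enat (Suc i) \<le> N \<omega>" unfolding N_def[of \<omega>] by (rule Sup_upper)
      then have "enat (Suc i) < enat n" using nN by (rule order_le_less_trans)
      then show False using that by simp
    qed
    then have lt: "sup_norm01 ?g < ereal (\<rho> * 2 powr (- (H - \<delta>) * real (Suc i)))" by simp
    have "ereal \<bar>?g t\<bar> \<le> sup_norm01 ?g" unfolding sup_norm01_def using t by (rule SUP_upper)
    from this lt have "ereal \<bar>?g t\<bar> < ereal (\<rho> * 2 powr (- (H - \<delta>) * real (Suc i)))" by (rule order_le_less_trans)
    then show "\<bar>dyadic_interp f (Suc i) t - dyadic_interp f i t\<bar> \<le> \<rho> * 2 powr (-(c + \<alpha>) * real (Suc i))"
      unfolding ce f_def by simp
  qed
  define q where "q = 2 powr (-c)"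
  have q: "0 < q" "q < 1" unfolding q_def using c by (auto intro: powr_less_one)
  have qn: "2 powr (- (H - \<alpha> - \<delta>) * real (n + 1)) = q ^ Suc n"
  proof -
    have "q ^ Suc n = q powr real (Suc n)" by (rule powr_realpow[symmetric, OF q(1)])
    also have "\<dots> = 2 powr (- (H - \<alpha> - \<delta>) * real (n + 1))" unfolding q_def c_def by (simp add: powr_powr)
    finally show ?thesis by simp
  qed
  have two: "2 \<le> (2::real) powr (2 - \<alpha>)"
  proof -
    have "(2::real) powr 1 \<le> 2 powr (2 - \<alpha>)" using al by (intro powr_mono) auto
    then show ?thesis by simp
  qed
  show "holder_norm01 \<alpha> (\<lambda>t. B \<omega> t - dyadic_interp (B \<omega>) n t)
       \<le> ereal (\<rho> * 2 powr (2 - \<alpha>) * 2 powr (- (H - \<alpha> - \<delta>) * real (n + 1))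
                 / (1 - 2 powr (- (H - \<alpha> - \<delta>))))"
    unfolding holder_norm01_def
  proof (rule SUP_least)
    fix p :: "real \<times> real" assume "p \<in> {(s, t). 0 \<le> s \<and> s < t \<and> t \<le> 1}"
    then obtain s t :: real where p: "p = (s, t)" and st: "0 \<le> s" "s < t" "t \<le> 1" by auto
    have m: "\<bar>(f s - dyadic_interp f n s) - (f t - dyadic_interp f n t)\<bar>
       \<le> 2 * \<rho> * (t - s) powr \<alpha> * q^Suc n / (1 - q)"
      unfolding q_def using main_det[OF cf al c _ bd st] \<rho> by simp
    have d: "0 < (t - s) powr \<alpha>" using st by simp
    have "\<bar>(f s - dyadic_interp f n s) - (f t - dyadic_interp f n t)\<bar> / (t - s) powr \<alpha>
       \<le> 2 * \<rho> * q^Suc n / (1 - q)"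
      using m d q by (simp add: divide_le_eq field_simps)
    also have "\<dots> \<le> \<rho> * 2 powr (2 - \<alpha>) * q^Suc n / (1 - q)"
      using two q \<rho> by (intro divide_right_mono mult_right_mono) auto
    finally have "\<bar>(f s - dyadic_interp f n s) - (f t - dyadic_interp f n t)\<bar> / (t - s) powr \<alpha>
       \<le> \<rho> * 2 powr (2 - \<alpha>) * q^Suc n / (1 - q)" .
    then show "ereal (\<bar>B \<omega> (fst p) - dyadic_interp (B \<omega>) n (fst p) - (B \<omega> (snd p) - dyadic_interp (B \<omega>) n (snd p))\<bar> /
        (snd p - fst p) powr \<alpha>)
       \<le> ereal (\<rho> * 2 powr (2 - \<alpha>) * 2 powr (- (H - \<alpha> - \<delta>) * real (n + 1))
                 / (1 - 2 powr (- (H - \<alpha> - \<delta>))))"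
      unfolding p qn f_def q_def c_def by simp
  qed
qed

end
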